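(* Consider the following online algorithm for Submodular Welfare with bidders $1,\dots,n$, utilities $f_1,\dots,f_n$, and items $1,\dots,m$ arriving in this (adversarial) order. Set $S^0_j=\emptyset$ for all $j$. For $i=1,\dots,m$: set $S^i_j=S^{i-1}_j$ for all $j$; order the bidders as $j_1,\dots,j_n$ so that $f_{j_1}(i\mid S^{i-1}_{j_1})\ge f_{j_2}(i\mid S^{i-1}_{j_2})\ge\dots\ge f_{j_n}(i\mid S^{i-1}_{j_n})$; choose a random bidder $j^i$ with $\Pr[j^i=j_r]=2^{-r}$ for $r=1,\dots,n$ (with the remaining probability $2^{-n}$ no bidder is chosen); if a bidder $j^i$ was chosen and $f_{j^i}(i\mid S^{i-1}_{j^i})\ge0$, set $S^i_{j^i}\leftarrow S^i_{j^i}\cup\{i\}$. Let $O=(O_1,\dots,O_n)$ be a fixed optimal allocation, i.e., a maximizer of $\sum_j f_j(O_j)$ over pairwise disjoint $O_1,\dots,O_n\subseteq\{1,\dots,m\}$. For $i=0,\dots,m$ let $H^i_j=(O_j\cap\{1,\dots,i\})\cup S^i_j$, and write $f(S^i)=\sum_j f_j(S^i_j)$, $f(H^i)=\sum_j f_j(H^i_j)$. Define $P^i=f(S^i)-f(S^{i-1})$ and $K^i=f(H^i)-f(H^{i-1})$. Then for every $i=1,\dots,m$, $\mathbb E[K^i]\le 2\,\mathbb E[P^i]$.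
   Context: Each $f_j:2^{\{1,\dots,m\}}\to\mathbb R_{\ge0}$ is a non-negative submodular (not necessarily monotone) function, i.e., $f_j(A\cup B)+f_j(A\cap B)\le f_j(A)+f_j(B)$ for all $A,B$. Notation: $f_j(i\mid S)=f_j(S\cup\{i\})-f_j(S)$. Ties in the ordering of bidders are broken arbitrarily. *)

theory Defs
  imports "HOL-Probability.Probability"
begin

text \<open>Bidders are 1..n, items are 1..m. An allocation is a map bidder => set of items.
  f j is the utility of bidder j.\<close>

type_synonym alloc = "nat \<Rightarrow> nat set"

definition marg :: "(nat set \<Rightarrow> real) \<Rightarrow> nat \<Rightarrow> nat set \<Rightarrow> real" where
  "marg g i S = g (insert i S) - g S"

definition submodular_on :: "nat set \<Rightarrow> (nat set \<Rightarrow> real) \<Rightarrow> bool" where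
  "submodular_on U g \<longleftrightarrow>
     (\<forall>A B. A \<subseteq> U \<longrightarrow> B \<subseteq> U \<longrightarrow> g (A \<union> B) + g (A \<inter> B) \<le> g A + g B)"

definition nonneg_on :: "nat set \<Rightarrow> (nat set \<Rightarrow> real) \<Rightarrow> bool" where
  "nonneg_on U g \<longleftrightarrow> (\<forall>A. A \<subseteq> U \<longrightarrow> 0 \<le> g A)"

definition welfare :: "nat \<Rightarrow> (nat \<Rightarrow> nat set \<Rightarrow> real) \<Rightarrow> alloc \<Rightarrow> real" where
  "welfare n f S = (\<Sum>j\<in>{1..n}. f j (S j))"

definition feasible_alloc :: "nat \<Rightarrow> nat \<Rightarrow> alloc \<Rightarrow> bool" where
  "feasible_alloc n m Opt \<longleftrightarrow> (\<forall>j\<in>{1..n}. Opt j \<subseteq> {1..m}) \<and>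
     (\<forall>j\<in>{1..n}. \<forall>k\<in>{1..n}. j \<noteq> k \<longrightarrow> Opt j \<inter> Opt k = {})"

definition optimal_alloc :: "nat \<Rightarrow> nat \<Rightarrow> (nat \<Rightarrow> nat set \<Rightarrow> real) \<Rightarrow> alloc \<Rightarrow> bool" where
  "optimal_alloc n m f Opt \<longleftrightarrow> feasible_alloc n m Opt \<and>
     (\<forall>O2. feasible_alloc n m O2 \<longrightarrow> welfare n f O2 \<le> welfare n f Opt)"

definition valid_order :: "nat \<Rightarrow> (nat \<Rightarrow> nat set \<Rightarrow> real) \<Rightarrow> nat \<Rightarrow> alloc \<Rightarrow> nat list \<Rightarrow> bool" where
  "valid_order n f i S js \<longleftrightarrow> distinct js \<and> set js = {1..n} \<and>
     sorted_wrt (\<lambda>a b. marg (f a) i (S a) \<ge> marg (f b) i (S b)) js"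

text \<open>Random choice: the r-th bidder in the list (1-indexed) with probability 2^-r,
  no bidder with the remaining probability 2^-(length).\<close>
fun choose_pmf :: "nat list \<Rightarrow> nat option pmf" where
  "choose_pmf [] = return_pmf None"
| "choose_pmf (j # js) =
     bind_pmf (bernoulli_pmf (1/2)) (\<lambda>b. if b then return_pmf (Some j) else choose_pmf js)"

text \<open>One step of the algorithm for item i, with tie-breaking rule tb
  (tb i S is the ordering used for item i when the current allocation is S).\<close>
definition alg_step :: "(nat \<Rightarrow> nat set \<Rightarrow> real) \<Rightarrow> (nat \<Rightarrow> alloc \<Rightarrow> nat list) \<Rightarrow> nat \<Rightarrow> alloc \<Rightarrow> alloc pmf" where
  "alg_step f tb i S =
     map_pmf (\<lambda>c. case c of None \<Rightarrow> S
                  | Some j \<Rightarrow> if marg (f j) i (S j) \<ge> 0 then S(j := insert i (S j)) else S)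
             (choose_pmf (tb i S))"

text \<open>The random trajectory after processing items 1..k: T t = S^t for t \<le> k.\<close>
fun alg_traj :: "(nat \<Rightarrow> nat set \<Rightarrow> real) \<Rightarrow> (nat \<Rightarrow> alloc \<Rightarrow> nat list) \<Rightarrow> nat \<Rightarrow> (nat \<Rightarrow> alloc) pmf" where
  "alg_traj f tb 0 = return_pmf (\<lambda>t j. {})"
| "alg_traj f tb (Suc k) =
     bind_pmf (alg_traj f tb k) (\<lambda>T. map_pmf (\<lambda>S'. T(Suc k := S')) (alg_step f tb (Suc k) (T k)))"

definition hybrid :: "alloc \<Rightarrow> nat \<Rightarrow> alloc \<Rightarrow> alloc" where
  "hybrid Opt i S = (\<lambda>j. (Opt j \<inter> {1..i}) \<union> S j)"

end

theory Submission
  imports Defs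
begin

lemma choose_set: "set_pmf (choose_pmf js) \<subseteq> insert None (Some ` set js)"
  by (induction js) (auto split: if_splits)

lemma choose_finite: "finite (set_pmf (choose_pmf js))"
  by (rule finite_subset[OF choose_set]) auto

lemma choose_exp:
  fixes h :: "nat option \<Rightarrow> real"
  shows "measure_pmf.expectation (choose_pmf js) h =
    (\<Sum>r<length js. (1/2)^Suc r * h (Some (js!r))) + (1/2)^length js * h None"
proof (induction js)
  case Nil
  then show ?case by simp
next
  case (Cons j js)
  have "measure_pmf.expectation (choose_pmf (j # js)) h =
     (\<Sum>b\<in>UNIV. pmf (bernoulli_pmf (1/2)) b *\<^sub>R measure_pmf.expectation
         (if b then return_pmf (Some j) else choose_pmf js) h)"
    by (simp only: choose_pmf.simps, rule pmf_expectation_bind) (auto simp: choose_finite)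
  also have "\<dots> = 1/2 * h (Some j) + 1/2 * measure_pmf.expectation (choose_pmf js) h"
    by (simp add: UNIV_bool)
  also have "\<dots> = (\<Sum>r<length (j#js). (1/2)^Suc r * h (Some ((j#js)!r))) + (1/2)^length (j#js) * h None"
    unfolding Cons by (simp only: length_Cons sum.lessThan_Suc_shift) (simp add: sum_distrib_left algebra_simps)
  finally show ?case .
qed

lemma geom_sum: "(\<Sum>r<N. (1/2::real)^Suc r) + (1/2)^N = 1"
  by (induction N) (auto simp: field_simps)

lemma step_set:
  assumes "S' \<in> set_pmf (alg_step f tb i S)"
  shows "S' j \<subseteq> insert i (S j)"
  using assms unfolding alg_step_def by (auto split: option.splits if_splits)

lemma step_finite: "finite (set_pmf (alg_step f tb i S))"
  unfolding alg_step_def by (simp add: choose_finite)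

lemma traj_finite: "finite (set_pmf (alg_traj f tb k))"
  by (induction k) (auto simp: step_finite)

lemma traj_inv: "T \<in> set_pmf (alg_traj f tb k) \<Longrightarrow> T t j \<subseteq> {1..t}"
proof (induction k arbitrary: T t)
  case 0
  then show ?case by simp
next
  case (Suc k)
  then obtain T0 S' where T0: "T0 \<in> set_pmf (alg_traj f tb k)"
    and S': "S' \<in> set_pmf (alg_step f tb (Suc k) (T0 k))" and T: "T = T0(Suc k := S')"
    by auto
  show ?case
  proof (cases "t = Suc k")
    case True
    have "S' j \<subseteq> insert (Suc k) (T0 k j)" by (rule step_set[OF S'])
    also have "\<dots> \<subseteq> {1..Suc k}" using Suc.IH[OF T0, of k] by auto
    finally show ?thesis using T True by simp
  next
    case False
    then show ?thesis using T Suc.IH[OF T0] by simp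
  qed
qed

lemma traj_proj:
  assumes "i \<le> k"
  shows "map_pmf (\<lambda>T. (T (i - 1), T i)) (alg_traj f tb k) = map_pmf (\<lambda>T. (T (i - 1), T i)) (alg_traj f tb i)"
  using assms
proof (induction k rule: dec_induct)
  case base
  then show ?case by simp
next
  case (step l)
  have ne: "i - 1 \<noteq> Suc l" "i \<noteq> Suc l" using step.hyps by auto
  have "map_pmf (\<lambda>T. (T (i - 1), T i)) (alg_traj f tb (Suc l))
      = bind_pmf (alg_traj f tb l) (\<lambda>T. map_pmf (\<lambda>_. (T (i - 1), T i)) (alg_step f tb (Suc l) (T l)))"
    using ne by (simp add: map_bind_pmf map_pmf_comp)
  also have "\<dots> = map_pmf (\<lambda>T. (T (i - 1), T i)) (alg_traj f tb l)"
    by (simp add: map_pmf_const map_pmf_def)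
  finally show ?case using step.IH by simp
qed

lemma welfare_diff: "welfare n f X - welfare n f Y = (\<Sum>l\<in>{1..n}. f l (X l) - f l (Y l))"
  unfolding welfare_def by (simp add: sum_subtractf)

lemma inner:
  assumes sub: "\<forall>j\<in>{1..n}. submodular_on {1..m} (f j)"
    and vo: "valid_order n f i S (tb i S)"
    and feas: "feasible_alloc n m Opt"
    and i1: "1 \<le> i" and im: "i \<le> m"
    and Ssub: "\<forall>j. S j \<subseteq> {1..i-1}"
  shows "measure_pmf.expectation (alg_step f tb i S)
           (\<lambda>S'. welfare n f (hybrid Opt i S') - welfare n f (hybrid Opt (i-1) S))
         \<le> 2 * measure_pmf.expectation (alg_step f tb i S) (\<lambda>S'. welfare n f S' - welfare n f S)"
proof -
  define js where "js = tb i S"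
  define a where "a l = marg (f l) i (S l)" for l
  define H where "H l = Opt l \<inter> {1..i-1} \<union> S l" for l
  define G where "G l = marg (f l) i (H l)" for l
  define w where "w l = (i \<in> Opt l)" for l
  define pp where "pp x = max x (0::real)" for x
  define stp where "stp c = (case c of None \<Rightarrow> S
                  | Some j \<Rightarrow> if marg (f j) i (S j) \<ge> 0 then S(j := insert i (S j)) else S)" for c
  define K where "K S' = welfare n f (hybrid Opt i S') - welfare n f (hybrid Opt (i-1) S)" for S'
  define P where "P S' = welfare n f S' - welfare n f S" for S'
  define W where "W = (\<Sum>l\<in>{1..n}. if w l then G l else 0)"
  define N where "N = length js"
  define c where "c r = (1/2::real)^Suc r" for r
  have js: "distinct js" "set js = {1..n}"
    "sorted_wrt (\<lambda>a b. marg (f a) i (S a) \<ge> marg (f b) i (S b)) js"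
    using vo unfolding valid_order_def js_def by auto
  have sorted: "a (js!s) \<le> a (js!r)" if "r < s" "s < N" for r s
    using sorted_wrt_nth_less[OF js(3) that(1) that(2)[unfolded N_def]] unfolding a_def by simp
  have SsubL: "S l \<subseteq> {1..i-1}" for l using Ssub by blast
  have iH: "i \<notin> H l" for l
  proof
    assume "i \<in> H l"
    then have "i \<in> S l" unfolding H_def by auto
    then have "i \<in> {1..i-1}" using Ssub by blast
    then show False by auto
  qed
  have HU: "H l \<subseteq> {1..m}" for l using SsubL[of l] im unfolding H_def by (auto simp: subset_iff)
  have GA: "G l \<le> a l" if "l \<in> {1..n}" for l
  proof -
    have sm: "submodular_on {1..m} (f l)" using sub that by auto
    have A: "insert i (S l) \<subseteq> {1..m}" using SsubL[of l] im i1 by (auto simp: subset_iff)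
    have "f l (insert i (S l) \<union> H l) + f l (insert i (S l) \<inter> H l) \<le> f l (insert i (S l)) + f l (H l)"
      using sm A HU unfolding submodular_on_def by blast
    moreover have "insert i (S l) \<union> H l = insert i (H l)" unfolding H_def by auto
    moreover have "insert i (S l) \<inter> H l = S l" using iH[of l] unfolding H_def by auto
    ultimately show ?thesis unfolding G_def a_def marg_def by simp
  qed
  have hyb0: "hybrid Opt (i-1) S = H" unfolding hybrid_def H_def by auto
  have Ii: "{1..i} = insert i {1..i-1}" using i1 by auto
  have hybS: "hybrid Opt i S l = (if w l then insert i (H l) else H l)" for l
    unfolding hybrid_def H_def w_def Ii by auto
  have hybJ: "hybrid Opt i (S(j := insert i (S j))) l = (if w l \<or> l = j then insert i (H l) else H l)" for l j
    unfolding hybrid_def H_def w_def Ii by auto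
  have KS: "K S = W"
    unfolding K_def welfare_diff W_def hyb0 by (rule sum.cong) (auto simp: hybS G_def marg_def)
  have PS: "P S = 0" unfolding P_def by simp
  have ppnn: "0 \<le> pp x" for x unfolding pp_def by simp
  have Ksome: "K (stp (Some j)) \<le> W + (if w j then 0 else pp (a j))"
    and Psome: "P (stp (Some j)) = pp (a j)" if j: "j \<in> {1..n}" for j
  proof -
    have "K (stp (Some j)) \<le> W + (if w j then 0 else pp (a j)) \<and> P (stp (Some j)) = pp (a j)"
    proof (cases "a j \<ge> 0")
      case True
      then have st: "stp (Some j) = S(j := insert i (S j))" unfolding stp_def a_def by simp
      have "K (stp (Some j)) = (\<Sum>l\<in>{1..n}. if w l \<or> l = j then G l else 0)"
        unfolding K_def welfare_diff st hyb0 by (rule sum.cong) (auto simp: hybJ G_def marg_def)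
      also have "\<dots> \<le> (\<Sum>l\<in>{1..n}. (if w l then G l else 0) + (if l = j then (if w j then 0 else pp (a j)) else 0))"
        by (rule sum_mono) (use GA True in \<open>auto simp: pp_def\<close>)
      also have "\<dots> = W + (if w j then 0 else pp (a j))"
        unfolding W_def sum.distrib using j by simp
      finally have k: "K (stp (Some j)) \<le> W + (if w j then 0 else pp (a j))" .
      have "P (stp (Some j)) = (\<Sum>l\<in>{1..n}. if l = j then a j else 0)"
        unfolding P_def welfare_diff st by (rule sum.cong) (auto simp: a_def marg_def)
      also have "\<dots> = pp (a j)" using j True by (simp add: pp_def)
      finally show ?thesis using k by simp
    next
      case False
      then have st: "stp (Some j) = S" unfolding stp_def a_def by simp
      show ?thesis unfolding st KS PS using False ppnn[of "a j"] by (auto simp: pp_def)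
    qed
    then show "K (stp (Some j)) \<le> W + (if w j then 0 else pp (a j))" "P (stp (Some j)) = pp (a j)"
      by auto
  qed
  have stpN: "stp None = S" by (simp add: stp_def)
  have jsr: "js ! r \<in> {1..n}" if "r < N" for r using that js(2) N_def nth_mem by blast
  have step_eq: "alg_step f tb i S = map_pmf stp (choose_pmf js)"
    unfolding alg_step_def stp_def js_def by simp
  have EK: "measure_pmf.expectation (alg_step f tb i S) K = (\<Sum>r<N. c r * K (stp (Some (js!r)))) + (1/2)^N * K (stp None)"
    unfolding step_eq integral_map_pmf choose_exp c_def N_def by simp
  have EP: "measure_pmf.expectation (alg_step f tb i S) P = (\<Sum>r<N. c r * pp (a (js!r)))"
    unfolding step_eq integral_map_pmf choose_exp c_def N_def
    using Psome jsr by (simp add: stpN PS N_def)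
  have key: "W \<le> (\<Sum>r<N. c r * pp (a (js!r))) + (\<Sum>r<N. c r * (if w (js!r) then pp (a (js!r)) else 0))"
  proof (cases "\<exists>ow\<in>{1..n}. w ow")
    case True
    then obtain ow where ow: "ow \<in> {1..n}" "w ow" by blast
    have uniq: "l = ow" if "l \<in> {1..n}" "w l" for l
    proof (rule ccontr)
      assume "l \<noteq> ow"
      have dj: "\<forall>j\<in>{1..n}. \<forall>k\<in>{1..n}. j \<noteq> k \<longrightarrow> Opt j \<inter> Opt k = {}"
        using feas unfolding feasible_alloc_def by blast
      have "Opt l \<inter> Opt ow = {}" using dj that(1) ow(1) \<open>l \<noteq> ow\<close> by blast
      moreover have "i \<in> Opt l" "i \<in> Opt ow" using that(2) ow(2) unfolding w_def by auto
      ultimately show False by blast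
    qed
    have "W = (\<Sum>l\<in>{1..n}. if l = ow then G ow else 0)"
      unfolding W_def
    proof (rule sum.cong)
      fix l assume "l \<in> {1..n}"
      then show "(if w l then G l else 0) = (if l = ow then G ow else 0)"
        using uniq[of l] ow(2) by (cases "w l") auto
    qed simp
    also have "\<dots> = G ow" using ow by simp
    finally have WG: "W = G ow" .
    have "ow \<in> set js" using ow js(2) by simp
    then obtain p where p: "p < N" "js ! p = ow"
      unfolding N_def by (auto simp: in_set_conv_nth)
    have cnn: "0 \<le> c r" for r unfolding c_def by simp
    have s1: "(\<Sum>r<Suc p. c r * pp (a ow)) \<le> (\<Sum>r<Suc p. c r * pp (a (js!r)))"
    proof (rule sum_mono)
      fix r assume r: "r \<in> {..<Suc p}"
      have "a ow \<le> a (js!r)"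
      proof (cases "r = p")
        case True then show ?thesis using p by simp
      next
        case False then show ?thesis using sorted[of r p] p r by simp
      qed
      then have "pp (a ow) \<le> pp (a (js!r))" unfolding pp_def by simp
      then show "c r * pp (a ow) \<le> c r * pp (a (js!r))" using cnn[of r] by (rule mult_left_mono)
    qed
    have s2: "(\<Sum>r<Suc p. c r * pp (a (js!r))) \<le> (\<Sum>r<N. c r * pp (a (js!r)))"
      by (rule sum_mono2) (use p in \<open>auto simp: cnn ppnn\<close>)
    have s3: "c p * pp (a ow) \<le> (\<Sum>r<N. c r * (if w (js!r) then pp (a (js!r)) else 0))"
    proof -
      have "c p * (if w (js!p) then pp (a (js!p)) else 0) \<le> (\<Sum>r<N. c r * (if w (js!r) then pp (a (js!r)) else 0))"
        by (rule member_le_sum) (use p in \<open>auto simp: cnn ppnn\<close>)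
      then show ?thesis using p ow by simp
    qed
    have s4: "(\<Sum>r<Suc p. c r * pp (a ow)) = pp (a ow) * (1 - (1/2)^Suc p)"
    proof -
      have g: "(\<Sum>r<Suc p. c r) = 1 - (1/2)^Suc p" using geom_sum[of "Suc p"] unfolding c_def by linarith
      have "(\<Sum>r<Suc p. c r * pp (a ow)) = (\<Sum>r<Suc p. c r) * pp (a ow)" by (rule sum_distrib_right[symmetric])
      then show ?thesis by (simp only: g mult.commute)
    qed
    have cp: "c p = (1/2)^Suc p" unfolding c_def by simp
    have "W \<le> pp (a ow)" using WG GA[OF ow(1)] unfolding pp_def by simp
    moreover have "pp (a ow) = pp (a ow) * (1 - (1/2)^Suc p) + (1/2)^Suc p * pp (a ow)"
      by (simp add: algebra_simps)
    ultimately show ?thesis using s1 s2 s3[unfolded cp] s4 by linarith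
  next
    case False
    then have "W = 0" unfolding W_def by (intro sum.neutral) auto
    moreover have "0 \<le> (\<Sum>r<N. c r * pp (a (js!r)))" "0 \<le> (\<Sum>r<N. c r * (if w (js!r) then pp (a (js!r)) else 0))"
      by (auto intro!: sum_nonneg simp: c_def ppnn)
    ultimately show ?thesis by simp
  qed
  have "(\<Sum>r<N. c r * K (stp (Some (js!r)))) + (1/2)^N * K (stp None)
     \<le> (\<Sum>r<N. c r * (W + (if w (js!r) then 0 else pp (a (js!r))))) + (1/2)^N * W"
    by (intro add_mono sum_mono mult_left_mono) (use Ksome[OF jsr] in \<open>auto simp: c_def stpN KS\<close>)
  also have "\<dots> = W * ((\<Sum>r<N. c r) + (1/2)^N) + (\<Sum>r<N. c r * (if w (js!r) then 0 else pp (a (js!r))))"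
    by (simp add: algebra_simps sum.distrib sum_distrib_left sum_distrib_right)
  also have "\<dots> = W + (\<Sum>r<N. c r * (if w (js!r) then 0 else pp (a (js!r))))"
    unfolding c_def geom_sum by simp
  also have "\<dots> \<le> 2 * (\<Sum>r<N. c r * pp (a (js!r)))"
  proof -
    have "(\<Sum>r<N. c r * (if w (js!r) then 0 else pp (a (js!r)))) + (\<Sum>r<N. c r * (if w (js!r) then pp (a (js!r)) else 0))
        = (\<Sum>r<N. c r * pp (a (js!r)))"
      by (simp add: sum.distrib[symmetric] algebra_simps if_distrib cong: if_cong)
    then show ?thesis using key by linarith
  qed
  finally show ?thesis using EK EP unfolding K_def P_def by simp
qed

theorem lemma6:
  fixes n m :: nat
    and f :: "nat \<Rightarrow> nat set \<Rightarrow> real"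
    and tb :: "nat \<Rightarrow> alloc \<Rightarrow> nat list"
    and Opt :: alloc
  assumes sub: "\<forall>j\<in>{1..n}. submodular_on {1..m} (f j)"
    and nonneg: "\<forall>j\<in>{1..n}. nonneg_on {1..m} (f j)"
    and tb_valid: "\<forall>i S. valid_order n f i S (tb i S)"
    and opt: "optimal_alloc n m f Opt"
    and i: "i \<in> {1..m}"
  shows "measure_pmf.expectation (alg_traj f tb m)
           (\<lambda>T. welfare n f (hybrid Opt i (T i)) - welfare n f (hybrid Opt (i - 1) (T (i - 1))))
         \<le> 2 * measure_pmf.expectation (alg_traj f tb m)
           (\<lambda>T. welfare n f (T i) - welfare n f (T (i - 1)))"
proof -
  obtain i' where ii: "i = Suc i'" using i by (cases i) auto
  have feas: "feasible_alloc n m Opt" using opt unfolding optimal_alloc_def by simp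
  have im: "i \<le> m" using i by simp
  define A where "A = set_pmf (alg_traj f tb i')"
  have E_eq: "measure_pmf.expectation (alg_traj f tb m) (\<lambda>T. g (T (i-1), T i))
     = (\<Sum>T\<in>A. pmf (alg_traj f tb i') T * measure_pmf.expectation (alg_step f tb i (T i')) (\<lambda>S'. g (T i', S')))"
    for g :: "alloc \<times> alloc \<Rightarrow> real"
  proof -
    have "measure_pmf.expectation (alg_traj f tb m) (\<lambda>T. g (T (i-1), T i))
        = measure_pmf.expectation (map_pmf (\<lambda>T. (T (i - 1), T i)) (alg_traj f tb m)) g"
      by simp
    also have "\<dots> = measure_pmf.expectation (map_pmf (\<lambda>T. (T (i - 1), T i)) (alg_traj f tb i)) g"
      using traj_proj[OF im] by simp
    also have "map_pmf (\<lambda>T. (T (i - 1), T i)) (alg_traj f tb i)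
       = bind_pmf (alg_traj f tb i') (\<lambda>T. map_pmf (\<lambda>S'. (T i', S')) (alg_step f tb i (T i')))"
      unfolding ii by (simp add: map_bind_pmf map_pmf_comp)
    also have "measure_pmf.expectation \<dots> g
       = (\<Sum>T\<in>A. pmf (alg_traj f tb i') T *\<^sub>R measure_pmf.expectation (map_pmf (\<lambda>S'. (T i', S')) (alg_step f tb i (T i'))) g)"
      by (rule pmf_expectation_bind) (auto simp: A_def traj_finite step_finite)
    finally show ?thesis by simp
  qed
  have "(\<Sum>T\<in>A. pmf (alg_traj f tb i') T * measure_pmf.expectation (alg_step f tb i (T i'))
            (\<lambda>S'. welfare n f (hybrid Opt i S') - welfare n f (hybrid Opt (i - 1) (T i'))))
     \<le> (\<Sum>T\<in>A. pmf (alg_traj f tb i') T * (2 * measure_pmf.expectation (alg_step f tb i (T i'))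
            (\<lambda>S'. welfare n f S' - welfare n f (T i'))))"
  proof (rule sum_mono, rule mult_left_mono)
    fix T assume T: "T \<in> A"
    have Ssub: "\<forall>j. T i' j \<subseteq> {1..i-1}" using traj_inv[of T f tb i' i'] T ii A_def by simp
    have "i - 1 = i'" using ii by simp
    then show "measure_pmf.expectation (alg_step f tb i (T i'))
            (\<lambda>S'. welfare n f (hybrid Opt i S') - welfare n f (hybrid Opt (i - 1) (T i')))
        \<le> 2 * measure_pmf.expectation (alg_step f tb i (T i')) (\<lambda>S'. welfare n f S' - welfare n f (T i'))"
      using inner[OF sub _ feas _ im Ssub, of tb] tb_valid ii by simp
  qed simp
  also have "\<dots> = 2 * (\<Sum>T\<in>A. pmf (alg_traj f tb i') T * measure_pmf.expectation (alg_step f tb i (T i'))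
            (\<lambda>S'. welfare n f S' - welfare n f (T i')))"
    by (simp add: sum_distrib_left algebra_simps)
  finally show ?thesis
    using E_eq[of "\<lambda>x. welfare n f (hybrid Opt i (snd x)) - welfare n f (hybrid Opt (i - 1) (fst x))"]
      E_eq[of "\<lambda>x. welfare n f (snd x) - welfare n f (fst x)"] ii by simp
qed

end
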